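(* Let $p,q\ge1$, $N\ge1$, and let $\mu$ be a $q\times p$ matrix of measures. Assume that $\mathscr M_N$, $\mathscr M_{N,(b,0)}$ ($b\in\{1,\dots,q\}$) and $\mathscr M_{N,(0,a)}$ ($a\in\{1,\dots,p\}$) admit Gauss--Borel factorizations $\mathscr M_{N,(n,m)}=\mathscr L_{N,(n,m)}^{-1}\mathscr U_{N,(n,m)}^{-1}$ with lower unitriangular $\mathscr L_{N,(n,m)}$, and let $U_b:=\mathscr U_{N,(b,0)}^{-1}\mathscr U_{N,(b-1,0)}$, $L_a:=\mathscr L_{N,(0,a-1)}\mathscr L_{N,(0,a)}^{-1}$ (so that $\mathscr T_N=L_1\cdots L_pU_q\cdots U_1$). Write $U_{b,n}:=(U_b)_{n,n}$ and $L_{a,n}:=(L_a)_{n,n-1}$. Then \[U_{b,n}=-\frac{\tau^B_{b-1,n}\,\tau^B_{b,n+1}}{\tau^B_{b-1,n+1}\,\tau^B_{b,n}},\qquad b\in\{1,\dots,q\},\ n\in\{0,1,\dots,N-b-1\},\] \[L_{a,n+1}=-\frac{\tau^A_{a-1,n+2}\,\tau^A_{a,n}}{\tau^A_{a-1,n+1}\,\tau^A_{a,n+1}},\qquad a\in\{1,\dots,p\},\ n\in\{0,1,\dots,N-a-1\}.\]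
   Context: All matrices are indexed from $0$. Fix integers $p,q\ge1$ and a $q\times p$ matrix $\mu$ of real measures on $\mathbb R$ with finite moments. For $r,n\ge1$, $X^{[n]}_{[r]}(x)$ is the $n\times r$ matrix whose row $k$ is $x^{\lfloor k/r\rfloor}e_{k\bmod r}^\top$ ($e_0,\dots,e_{r-1}$ standard basis of $\mathbb R^r$). Moment matrices: $\mathscr M^{[n,m]}=\int X^{[n]}_{[q]}\,\mathrm d\mu\,(X^{[m]}_{[p]})^\top$, $\mathscr M_n=\mathscr M^{[n,n]}$. Gauss--Borel factorization: $\mathscr M_N=\mathscr L_N^{-1}\mathscr U_N^{-1}$, $\mathscr L_N$ lower unitriangular, $\mathscr U_N$ nonsingular upper triangular. The polynomial matrices are $B^{[N]}(x):=\mathscr L_NX^{[N]}_{[q]}(x)$ ($N\times q$, entry in row $n$ and column $j$ denoted $B^{(j)}_n(x)$, $j=1,\dots,q$) and $A^{[N]}(x):=(X^{[N]}_{[p]}(x))^\top\mathscr U_N$ ($p\times N$, entry in row $i$ and column $n$ denoted $A^{(i)}_n(x)$, $i=1,\dots,p$). $\Lambda^{[n,n+r]}_{[r]}$ is the $n\times(n+r)$ matrix with entries $\delta_{j,i+r}$, and $\mathscr T_N:=\mathscr L_N\Lambda^{[N,N+q]}_{[q]}\mathscr M^{[N+q,N]}\mathscr U_N$. $\mathfrak X_{[r,1]}(x)$ is the $r\times r$ matrix with $(\mathfrak X_{[r,1]})_{i,i+1}=1$ ($0\le i\le r-2$), $(\mathfrak X_{[r,1]})_{r-1,0}=x$, other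 entries $0$; $\mathrm d\mu_{(n,m)}:=\mathfrak X_{[q,1]}^n\,\mathrm d\mu\,(\mathfrak X_{[p,1]}^m)^\top$ with moment matrices $\mathscr M_{N,(n,m)}$ defined as for $\mu$. The $\tau$-determinants are \[\tau^B_{b,n}:=\det\big(B^{(j)}_{n+i}(0)\big)_{0\le i\le b-1,\ 1\le j\le b},\qquad \tau^A_{a,n}:=\det\big(A^{(i)}_{n+a-k}(0)\big)_{1\le i\le a,\ 1\le k\le a},\] (so the row $i$ of the matrix defining $\tau^A_{a,n}$ is $(A^{(i)}_{n+a-1}(0),\dots,A^{(i)}_n(0))$), and $\tau^A_{0,n}=\tau^B_{0,n}=1$. *)

theory Defs
  imports "HOL-Analysis.Analysis" "Jordan_Normal_Form.Determinant"
begin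

text \<open>Matrices are Jordan_Normal_Form matrices, indexed from 0.
  A real (signed) measure on the real line is represented by its Jordan decomposition,
  a pair (positive part, negative part) of measures on the Borel sets of the reals.\<close>

type_synonym smeasure = "real measure \<times> real measure"

definition sint :: "smeasure \<Rightarrow> (real \<Rightarrow> real) \<Rightarrow> real" where
  "sint m f = integral\<^sup>L (fst m) f - integral\<^sup>L (snd m) f"

definition real_measure_fm :: "smeasure \<Rightarrow> bool" where
  "real_measure_fm m \<longleftrightarrow>
     sets (fst m) = sets borel \<and> sets (snd m) = sets borel \<and>
     (\<forall>k::nat. integrable (fst m) (\<lambda>x. x ^ k) \<and> integrable (snd m) (\<lambda>x. x ^ k))"

definition minv :: "real mat \<Rightarrow> real mat" where
  "minv A = (THE B. B \<in> carrier_mat (dim_row A) (dim_row A) \<and>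
               A * B = 1\<^sub>m (dim_row A) \<and> B * A = 1\<^sub>m (dim_row A))"

definition Xmat :: "nat \<Rightarrow> nat \<Rightarrow> real \<Rightarrow> real mat" where
  "Xmat r n x = mat n r (\<lambda>(k, j). if j = k mod r then x ^ (k div r) else 0)"

definition frakX :: "nat \<Rightarrow> real \<Rightarrow> real mat" where
  "frakX r x = mat r r (\<lambda>(i, j). if j = i + 1 then 1 else if i = r - 1 \<and> j = 0 then x else 0)"

text \<open>Moment matrix  M^{[nr,nc]} of  d\<mu>_{(n,m)} = \<frak>X_q^n d\<mu> (\<frak>X_p^m)^T,
  where \<mu> is a q x p matrix of real measures (entries \<mu> i j, i<q, j<p), i.e.
  entry (k,l) is  sum_{i,j,i',j'} int X_q(x)_{k,i} (\<frak>X_q(x)^n)_{i,i'} (\<frak>X_p(x)^m)_{j,j'} X_p(x)_{l,j} d\<mu>_{i',j'}.\<close>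
definition moment_mat ::
  "nat \<Rightarrow> nat \<Rightarrow> (nat \<Rightarrow> nat \<Rightarrow> smeasure) \<Rightarrow> nat \<Rightarrow> nat \<Rightarrow> nat \<Rightarrow> nat \<Rightarrow> real mat" where
  "moment_mat q p \<mu> n m nr nc = mat nr nc (\<lambda>(k, l).
     (\<Sum>i<q. \<Sum>j<p. \<Sum>i'<q. \<Sum>j'<p.
        sint (\<mu> i' j') (\<lambda>x. Xmat q nr x $$ (k, i) * (frakX q x ^\<^sub>m n) $$ (i, i')
                           * (frakX p x ^\<^sub>m m) $$ (j, j') * Xmat p nc x $$ (l, j))))"

definition gauss_borel :: "nat \<Rightarrow> real mat \<Rightarrow> real mat \<Rightarrow> real mat \<Rightarrow> bool" where
  "gauss_borel N M L U \<longleftrightarrow>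
     L \<in> carrier_mat N N \<and> U \<in> carrier_mat N N \<and>
     (\<forall>i<N. \<forall>j<N. i < j \<longrightarrow> L $$ (i, j) = 0) \<and> (\<forall>i<N. L $$ (i, i) = 1) \<and>
     (\<forall>i<N. \<forall>j<N. j < i \<longrightarrow> U $$ (i, j) = 0) \<and> invertible_mat U \<and>
     M = minv L * minv U"

definition Bpoly :: "nat \<Rightarrow> nat \<Rightarrow> real mat \<Rightarrow> real \<Rightarrow> real mat" where
  "Bpoly q N L x = L * Xmat q N x"

definition Apoly :: "nat \<Rightarrow> nat \<Rightarrow> real mat \<Rightarrow> real \<Rightarrow> real mat" where
  "Apoly p N U x = transpose_mat (Xmat p N x) * U"

text \<open>B^{(j)}_n is the entry in row n and column j-1 (labels j = 1..q);
  A^{(i)}_n is the entry in row i-1 and column n (labels i = 1..p).\<close>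
definition tauB :: "nat \<Rightarrow> nat \<Rightarrow> real mat \<Rightarrow> nat \<Rightarrow> nat \<Rightarrow> real" where
  "tauB q N L b n = (if b = 0 then 1 else
     det (mat b b (\<lambda>(i, j). Bpoly q N L 0 $$ (n + i, j))))"

definition tauA :: "nat \<Rightarrow> nat \<Rightarrow> real mat \<Rightarrow> nat \<Rightarrow> nat \<Rightarrow> real" where
  "tauA p N U a n = (if a = 0 then 1 else
     det (mat a a (\<lambda>(i, k). Apoly p N U 0 $$ (i, n + a - (k + 1)))))"

end

theory Submission
  imports Defs
begin

lemma minv_unique:
  assumes A: "A \<in> carrier_mat n n" and B: "B \<in> carrier_mat n n"
    and AB: "A * B = 1\<^sub>m n" and BA: "B * A = 1\<^sub>m n"
  shows "minv A = B"
  unfolding minv_def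
proof (rule the_equality)
  show "B \<in> carrier_mat (dim_row A) (dim_row A) \<and> A * B = 1\<^sub>m (dim_row A) \<and> B * A = 1\<^sub>m (dim_row A)"
    using A B AB BA by auto
next
  fix C assume C: "C \<in> carrier_mat (dim_row A) (dim_row A) \<and> A * C = 1\<^sub>m (dim_row A) \<and> C * A = 1\<^sub>m (dim_row A)"
  hence Cc: "C \<in> carrier_mat n n" and CA: "C * A = 1\<^sub>m n" using A by auto
  have "C = C * (A * B)" using Cc AB by simp
  also have "\<dots> = (C * A) * B" using Cc A B by (simp add: assoc_mult_mat)
  also have "\<dots> = B" using CA B by simp
  finally show "C = B" .
qed

lemma minv_det:
  assumes A: "A \<in> carrier_mat n n" and d: "det A \<noteq> 0"
  shows "minv A \<in> carrier_mat n n \<and> A * minv A = 1\<^sub>m n \<and> minv A * A = 1\<^sub>m n"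
proof -
  have "A \<in> Units (ring_mat TYPE(real) n undefined)"
    by (rule det_non_zero_imp_unit[OF A d])
  then obtain B where B: "B \<in> carrier_mat n n" "B * A = 1\<^sub>m n" "A * B = 1\<^sub>m n"
    unfolding Units_def by (auto simp: ring_mat_simps)
  show ?thesis using minv_unique[OF A B(1) B(3) B(2)] B by simp
qed

lemma minv_inv:
  assumes A: "A \<in> carrier_mat n n" and d: "invertible_mat A"
  shows "minv A \<in> carrier_mat n n \<and> A * minv A = 1\<^sub>m n \<and> minv A * A = 1\<^sub>m n"
proof -
  from d obtain B where AB: "A * B = 1\<^sub>m n" and BA: "B * A = 1\<^sub>m (dim_row B)"
    unfolding invertible_mat_def inverts_mat_def using A by auto
  have "dim_col B = n" using AB by (metis index_mult_mat(3) index_one_mat(3))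
  moreover have "dim_row B = n" using BA A by (metis index_mult_mat(3) index_one_mat(3) carrier_matD(2))
  ultimately have Bc: "B \<in> carrier_mat n n" by auto
  show ?thesis using minv_unique[OF A Bc AB] BA Bc AB by simp
qed

lemma tri_solve:
  fixes A :: "real mat" and y :: "nat \<Rightarrow> real"
  assumes up: "\<And>i j. i < N \<Longrightarrow> j < N \<Longrightarrow> j < i \<Longrightarrow> A $$ (i, j) = 0"
    and dg: "\<And>i. i < N \<Longrightarrow> A $$ (i, i) \<noteq> 0"
    and m: "m < N"
    and eq: "\<And>c. c \<le> m \<Longrightarrow> (\<Sum>t<N. y t * A $$ (t, c)) = (if c = m then r else 0)"
  shows "(\<forall>t<m. y t = 0) \<and> y m * A $$ (m, m) = r"
proof -
  have red: "(\<Sum>t<N. y t * A $$ (t, c)) = y c * A $$ (c, c)"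
    if c: "c < N" and z: "\<forall>t<c. y t = 0" for c
  proof -
    have "(\<Sum>t<N. y t * A $$ (t, c)) = (\<Sum>t\<in>{c}. y t * A $$ (t, c))"
    proof (rule sum.mono_neutral_right)
      show "\<forall>i\<in>{..<N} - {c}. y i * A $$ (i, c) = 0"
      proof
        fix i assume "i \<in> {..<N} - {c}"
        hence "i < c \<or> c < i" "i < N" by auto
        thus "y i * A $$ (i, c) = 0" using z up[of i c] c by auto
      qed
    qed (use c in auto)
    thus ?thesis by simp
  qed
  have z: "\<forall>t<c. y t = 0" if "c \<le> m" for c
    using that
  proof (induction c)
    case 0 thus ?case by simp
  next
    case (Suc c)
    have "y c * A $$ (c, c) = 0" using eq[of c] red[of c] Suc m by auto
    hence "y c = 0" using dg[of c] Suc m by auto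
    thus ?case using Suc by (auto simp: less_Suc_eq)
  qed
  show ?thesis using z[of m] eq[of m] red[of m] m by auto
qed

lemma upper_inv:
  fixes A B :: "real mat"
  assumes A: "A \<in> carrier_mat N N" and B: "B \<in> carrier_mat N N" and BA: "B * A = 1\<^sub>m N"
    and up: "\<And>i j. i < N \<Longrightarrow> j < N \<Longrightarrow> j < i \<Longrightarrow> A $$ (i, j) = 0"
    and dg: "\<And>i. i < N \<Longrightarrow> A $$ (i, i) \<noteq> 0"
  shows "\<And>i j. i < N \<Longrightarrow> j < N \<Longrightarrow> j < i \<Longrightarrow> B $$ (i, j) = 0"
    and "\<And>i. i < N \<Longrightarrow> B $$ (i, i) * A $$ (i, i) = 1"
proof -
  have key: "(\<forall>t<i. B $$ (i, t) = 0) \<and> B $$ (i, i) * A $$ (i, i) = 1" if i: "i < N" for i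
  proof (rule tri_solve[OF up dg i])
    fix c assume c: "c \<le> i"
    have "(B * A) $$ (i, c) = (\<Sum>t<N. B $$ (i, t) * A $$ (t, c))"
      using A B i c by (simp add: scalar_prod_def lessThan_atLeast0)
    thus "(\<Sum>t<N. B $$ (i, t) * A $$ (t, c)) = (if c = i then 1 else 0)"
      using BA i c by auto
  qed auto
  show "\<And>i j. i < N \<Longrightarrow> j < N \<Longrightarrow> j < i \<Longrightarrow> B $$ (i, j) = 0" using key by auto
  show "\<And>i. i < N \<Longrightarrow> B $$ (i, i) * A $$ (i, i) = 1" using key by auto
qed

lemma frakX_carrier[simp]: "frakX r x \<in> carrier_mat r r"
  unfolding frakX_def by simp

lemma frakX_dim[simp]: "dim_row (frakX r x) = r" "dim_col (frakX r x) = r"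
  unfolding frakX_def by simp_all

lemma frakX_pow:
  assumes i: "i < r" and j: "j < r"
  shows "(frakX r x ^\<^sub>m n) $$ (i, j) = (if j = (i + n) mod r then x ^ ((i + n) div r) else 0)"
  using j
proof (induction n arbitrary: j)
  case 0
  thus ?case using i by (simp add: frakX_def)
next
  case (Suc n)
  define s where "s = (i + n) mod r"
  define d where "d = (i + n) div r"
  have s: "s < r" using i unfolding s_def by simp
  have "(frakX r x ^\<^sub>m Suc n) $$ (i, j) = (\<Sum>t<r. (frakX r x ^\<^sub>m n) $$ (i, t) * frakX r x $$ (t, j))"
    using i Suc.prems by (simp add: scalar_prod_def lessThan_atLeast0 pow_mat_dim_square[OF frakX_carrier])
  also have "\<dots> = (\<Sum>t<r. (if t = s then x ^ d * frakX r x $$ (t, j) else 0))"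
    by (rule sum.cong) (auto simp: Suc.IH s_def d_def)
  also have "\<dots> = x ^ d * frakX r x $$ (s, j)" using s by simp
  also have "\<dots> = (if j = (i + Suc n) mod r then x ^ ((i + Suc n) div r) else 0)"
  proof (cases "Suc s = r")
    case True
    have "(i + Suc n) mod r = 0" "(i + Suc n) div r = Suc d"
      using True unfolding s_def d_def by (simp_all add: mod_Suc div_Suc)
    thus ?thesis using True s Suc.prems by (auto simp: frakX_def)
  next
    case False
    have "(i + Suc n) mod r = Suc s" "(i + Suc n) div r = d"
      using False unfolding s_def d_def by (simp_all add: mod_Suc div_Suc)
    thus ?thesis using False s Suc.prems by (auto simp: frakX_def)
  qed
  finally show ?case .
qed

lemma sum_if_const: "(\<Sum>x\<in>A. if P then f x else 0) = (if P then (\<Sum>x\<in>A. f x) else (0::real))"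
  by simp

definition gm :: "nat \<Rightarrow> nat \<Rightarrow> (nat \<Rightarrow> nat \<Rightarrow> smeasure) \<Rightarrow> nat \<Rightarrow> nat \<Rightarrow> real" where
  "gm q p \<mu> K L' = sint (\<mu> (K mod q) (L' mod p)) (\<lambda>x. x ^ (K div q) * x ^ (L' div p))"

lemma sint_zero[simp]: "sint m (\<lambda>x. 0) = 0"
  unfolding sint_def by simp

lemma div_mod_add: "(k::nat) div q + (k mod q + n) div q = (k + n) div q"
  by (simp add: div_add1_eq[of k n q] div_add1_eq[of "k mod q" n q])

lemma moment_entry:
  assumes k: "k < nr" and l: "l < nc" and q: "q \<ge> 1" and p: "p \<ge> 1"
  shows "moment_mat q p \<mu> n m nr nc $$ (k, l) = gm q p \<mu> (k + n) (l + m)"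
proof -
  define h where "h = (\<lambda>x::real. x ^ ((k + n) div q) * x ^ ((l + m) div p))"
  have D1: "(l mod p + m) div p + l div p = (l + m) div p"
    using div_mod_add[of l p m] by simp
  have pt: "(\<lambda>x. Xmat q nr x $$ (k, i) * (frakX q x ^\<^sub>m n) $$ (i, i')
                           * (frakX p x ^\<^sub>m m) $$ (j, j') * Xmat p nc x $$ (l, j))
        = (if i = k mod q then if j = l mod p then if i' = (k + n) mod q then
             if j' = (l + m) mod p then h else (\<lambda>x. 0) else (\<lambda>x. 0) else (\<lambda>x. 0) else (\<lambda>x. 0))"
    if "i < q" "j < p" "i' < q" "j' < p" for i j i' j'
    using that k l q p
    by (auto simp: Xmat_def frakX_pow h_def mod_add_left_eq power_add[symmetric] div_mod_add add.assoc D1)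
  have "moment_mat q p \<mu> n m nr nc $$ (k, l) = (\<Sum>i<q. \<Sum>j<p. \<Sum>i'<q. \<Sum>j'<p.
      sint (\<mu> i' j') (if i = k mod q then if j = l mod p then if i' = (k + n) mod q then
             if j' = (l + m) mod p then h else (\<lambda>x. 0) else (\<lambda>x. 0) else (\<lambda>x. 0) else (\<lambda>x. 0)))"
    using k l by (simp add: moment_mat_def pt)
  also have "\<dots> = sint (\<mu> ((k + n) mod q) ((l + m) mod p)) h"
    using q p by (simp add: if_distrib[of "sint _"] sum_if_const cong: if_cong)
  finally show ?thesis unfolding gm_def h_def by (simp add: power_add)
qed

lemma det_unitcols:
  fixes f :: "nat \<Rightarrow> nat \<Rightarrow> real"
  shows "det (mat (n + b) (n + b) (\<lambda>(r, c). if c < n then f r c else if r = c - n then 1 else 0))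
         = (-1) ^ (n * b) * det (mat n n (\<lambda>(r, c). f (r + b) c))"
proof (induction b arbitrary: f)
  case 0
  have "mat (n + 0) (n + 0) (\<lambda>(r, c). if c < n then f r c else if r = c - n then 1 else 0)
        = mat n n (\<lambda>(r, c). f (r + 0) c)"
    by (rule eq_matI) auto
  thus ?case by simp
next
  case (Suc b)
  define Z where "Z = mat (n + Suc b) (n + Suc b) (\<lambda>(r, c). if c < n then f r c else if r = c - n then 1 else (0::real))"
  have Zc: "Z \<in> carrier_mat (n + Suc b) (n + Suc b)" unfolding Z_def by simp
  have "det Z = (\<Sum>i<n + Suc b. Z $$ (i, n) * cofactor Z i n)"
    by (rule laplace_expansion_column[OF Zc]) simp
  also have "\<dots> = (\<Sum>i<n + Suc b. if i = 0 then cofactor Z 0 n else 0)"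
    by (rule sum.cong) (auto simp: Z_def)
  also have "\<dots> = cofactor Z 0 n" by simp
  also have "\<dots> = (-1) ^ n * det (mat_delete Z 0 n)" unfolding cofactor_def by simp
  also have "mat_delete Z 0 n = mat (n + b) (n + b) (\<lambda>(r, c). if c < n then f (Suc r) c else if r = c - n then 1 else 0)"
    unfolding mat_delete_def Z_def by (rule eq_matI) auto
  also have "det \<dots> = (-1) ^ (n * b) * det (mat n n (\<lambda>(r, c). f (Suc (r + b)) c))"
    using Suc.IH[of "\<lambda>r c. f (Suc r) c"] by simp
  finally show ?case unfolding Z_def by (simp add: power_add)
qed

lemma det_block_upper:
  fixes G :: "real mat"
  assumes G: "G \<in> carrier_mat (n + b) (n + b)"
    and z: "\<And>r c. n \<le> r \<Longrightarrow> r < n + b \<Longrightarrow> c < n \<Longrightarrow> G $$ (r, c) = 0"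
  shows "det G = det (mat n n (\<lambda>(r, c). G $$ (r, c))) * det (mat b b (\<lambda>(r, c). G $$ (r + n, c + n)))"
proof -
  have "G = four_block_mat (mat n n (\<lambda>(r, c). G $$ (r, c))) (mat n b (\<lambda>(r, c). G $$ (r, c + n)))
            (0\<^sub>m b n) (mat b b (\<lambda>(r, c). G $$ (r + n, c + n)))"
    by (rule eq_matI) (use G z in auto)
  also have "det \<dots> = det (mat n n (\<lambda>(r, c). G $$ (r, c))) * det (mat b b (\<lambda>(r, c). G $$ (r + n, c + n)))"
    by (rule det_four_block_mat_lower_left_zero) auto
  finally show ?thesis .
qed

definition lead :: "nat \<Rightarrow> real mat \<Rightarrow> real mat" where
  "lead k A = mat k k (\<lambda>(i, j). A $$ (i, j))"

lemma lead_carrier[simp]: "lead k A \<in> carrier_mat k k" unfolding lead_def by simp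
lemma lead_dim[simp]: "dim_row (lead k A) = k" "dim_col (lead k A) = k" unfolding lead_def by simp_all

lemma lead_mult:
  assumes A: "A \<in> carrier_mat N N" and B: "B \<in> carrier_mat N N" and k: "k \<le> N"
    and z: "\<And>i j t. i < k \<Longrightarrow> j < k \<Longrightarrow> k \<le> t \<Longrightarrow> t < N \<Longrightarrow> A $$ (i, t) * B $$ (t, j) = 0"
  shows "lead k (A * B) = lead k A * lead k B"
proof (rule eq_matI)
  fix i j assume i: "i < dim_row (lead k A * lead k B)" and j: "j < dim_col (lead k A * lead k B)"
  hence i: "i < k" and j: "j < k" by auto
  have "lead k (A * B) $$ (i, j) = (\<Sum>t<N. A $$ (i, t) * B $$ (t, j))"
    using A B i j k by (simp add: lead_def scalar_prod_def lessThan_atLeast0)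
  also have "\<dots> = (\<Sum>t<k. A $$ (i, t) * B $$ (t, j))"
    by (rule sum.mono_neutral_right) (use k z i j in auto)
  also have "\<dots> = (lead k A * lead k B) $$ (i, j)"
    using i j by (simp add: lead_def scalar_prod_def lessThan_atLeast0)
  finally show "lead k (A * B) $$ (i, j) = (lead k A * lead k B) $$ (i, j)" .
qed auto

lemma det_upper_prod:
  assumes A: "A \<in> carrier_mat k k" and up: "\<And>i j. i < k \<Longrightarrow> j < i \<Longrightarrow> A $$ (i, j) = 0"
  shows "det A = (\<Prod>i<k. A $$ (i, i))"
proof -
  have "det A = prod_list (diag_mat A)"
    by (rule det_upper_triangular[OF _ A]) (use A up in \<open>auto simp: upper_triangular_def\<close>)
  also have "\<dots> = (\<Prod>i<k. A $$ (i, i))"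
    using A by (simp add: diag_mat_def prod.distinct_set_conv_list[symmetric] atLeast0LessThan)
  finally show ?thesis .
qed

lemma det_lower_prod:
  assumes A: "A \<in> carrier_mat k k" and lo: "\<And>i j. i < j \<Longrightarrow> j < k \<Longrightarrow> A $$ (i, j) = 0"
  shows "det A = (\<Prod>i<k. A $$ (i, i))"
proof -
  have "det A = prod_list (diag_mat A)"
    by (rule det_lower_triangular[OF _ A]) (use lo in auto)
  also have "\<dots> = (\<Prod>i<k. A $$ (i, i))"
    using A by (simp add: diag_mat_def prod.distinct_set_conv_list[symmetric] atLeast0LessThan)
  finally show ?thesis .
qed

lemma GB_facts:
  assumes gb: "gauss_borel N M L U"
  shows "M \<in> carrier_mat N N" and "L \<in> carrier_mat N N" and "U \<in> carrier_mat N N"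
    and "L * M = minv U" and "M * U = minv L"
    and "minv U \<in> carrier_mat N N" and "minv L \<in> carrier_mat N N"
    and "\<And>i j. i < N \<Longrightarrow> j < N \<Longrightarrow> j < i \<Longrightarrow> minv U $$ (i, j) = 0"
    and "\<And>i. i < N \<Longrightarrow> minv U $$ (i, i) * U $$ (i, i) = 1"
    and "\<And>i j. i < N \<Longrightarrow> j < N \<Longrightarrow> i < j \<Longrightarrow> minv L $$ (i, j) = 0"
    and "\<And>i. i < N \<Longrightarrow> minv L $$ (i, i) = 1"
    and "\<And>i j. i < N \<Longrightarrow> j < N \<Longrightarrow> j < i \<Longrightarrow> U $$ (i, j) = 0"
    and "\<And>i j. i < N \<Longrightarrow> j < N \<Longrightarrow> i < j \<Longrightarrow> L $$ (i, j) = 0"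
    and "\<And>i. i < N \<Longrightarrow> L $$ (i, i) = 1"
    and "\<And>k. k \<le> N \<Longrightarrow> det (lead k M) = (\<Prod>i<k. minv U $$ (i, i))"
proof -
  note g = gb[unfolded gauss_borel_def]
  have Lc: "L \<in> carrier_mat N N" and Uc: "U \<in> carrier_mat N N" using g by auto
  have Lup: "\<And>i j. i < N \<Longrightarrow> j < N \<Longrightarrow> i < j \<Longrightarrow> L $$ (i, j) = 0" using g by auto
  have Ld: "\<And>i. i < N \<Longrightarrow> L $$ (i, i) = 1" using g by auto
  have Ulo: "\<And>i j. i < N \<Longrightarrow> j < N \<Longrightarrow> j < i \<Longrightarrow> U $$ (i, j) = 0" using g by auto
  have detL: "det L = 1"
    using det_lower_prod[OF Lc] Lup Ld by simp
  have iL: "minv L \<in> carrier_mat N N \<and> L * minv L = 1\<^sub>m N \<and> minv L * L = 1\<^sub>m N"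
    using minv_det[OF Lc] detL by simp
  have iU: "minv U \<in> carrier_mat N N \<and> U * minv U = 1\<^sub>m N \<and> minv U * U = 1\<^sub>m N"
    using minv_inv[OF Uc] g by simp
  have M: "M = minv L * minv U" using g by simp
  show Mc: "M \<in> carrier_mat N N" using M iL iU by (metis mult_carrier_mat)
  show "L \<in> carrier_mat N N" "U \<in> carrier_mat N N" by (fact Lc, fact Uc)
  show "minv U \<in> carrier_mat N N" "minv L \<in> carrier_mat N N" using iL iU by auto
  have "L * M = L * (minv L * minv U)" by (simp add: M)
  also have "\<dots> = (L * minv L) * minv U" by (rule assoc_mult_mat[symmetric]) (use Lc iL iU in auto)
  finally have "L * M = (L * minv L) * minv U" .
  thus LM: "L * M = minv U" using iL iU left_mult_one_mat by metis
  have "M * U = (minv L * minv U) * U" by (simp add: M)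
  also have "\<dots> = minv L * (minv U * U)" by (rule assoc_mult_mat) (use Uc iL iU in auto)
  finally have "M * U = minv L * (minv U * U)" .
  thus "M * U = minv L" using iL iU right_mult_one_mat by metis
  have Ud: "\<And>i. i < N \<Longrightarrow> U $$ (i, i) \<noteq> 0"
  proof -
    fix i assume i: "i < N"
    have "det U = (\<Prod>i<N. U $$ (i, i))" using det_upper_prod[OF Uc] Ulo by auto
    moreover have "det U * det (minv U) = 1" using det_mult[OF Uc, of "minv U"] iU by simp
    ultimately have "(\<Prod>i<N. U $$ (i, i)) \<noteq> 0" by (metis mult_zero_left zero_neq_one)
    thus "U $$ (i, i) \<noteq> 0" using i by (simp add: prod_zero_iff)
  qed
  show VU: "\<And>i j. i < N \<Longrightarrow> j < N \<Longrightarrow> j < i \<Longrightarrow> minv U $$ (i, j) = 0"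
    and Vd: "\<And>i. i < N \<Longrightarrow> minv U $$ (i, i) * U $$ (i, i) = 1"
    using upper_inv[OF Uc _ _ Ulo Ud] iU by auto
  have LT: "transpose_mat L \<in> carrier_mat N N" using Lc by simp
  have "transpose_mat (L * minv L) = transpose_mat (minv L) * transpose_mat L"
    by (rule transpose_mult) (use Lc iL in auto)
  hence TT: "transpose_mat (minv L) * transpose_mat L = 1\<^sub>m N" using iL by (simp add: transpose_one)
  have "\<And>i j. i < N \<Longrightarrow> j < N \<Longrightarrow> j < i \<Longrightarrow> transpose_mat (minv L) $$ (i, j) = 0"
   and "\<And>i. i < N \<Longrightarrow> transpose_mat (minv L) $$ (i, i) * transpose_mat L $$ (i, i) = 1"
    using upper_inv[OF LT _ TT] iL Lc Lup Ld by auto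
  thus "\<And>i j. i < N \<Longrightarrow> j < N \<Longrightarrow> i < j \<Longrightarrow> minv L $$ (i, j) = 0"
    and "\<And>i. i < N \<Longrightarrow> minv L $$ (i, i) = 1"
    using iL Lc Ld by auto
  show "\<And>i j. i < N \<Longrightarrow> j < N \<Longrightarrow> j < i \<Longrightarrow> U $$ (i, j) = 0" by (fact Ulo)
  show "\<And>i j. i < N \<Longrightarrow> j < N \<Longrightarrow> i < j \<Longrightarrow> L $$ (i, j) = 0" by (fact Lup)
  show "\<And>i. i < N \<Longrightarrow> L $$ (i, i) = 1" by (fact Ld)
  fix k assume k: "k \<le> N"
  have "lead k (minv U) = lead k L * lead k M"
    unfolding LM[symmetric] by (rule lead_mult[OF Lc Mc k]) (use Lup in auto)
  hence "det (lead k (minv U)) = det (lead k L) * det (lead k M)"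
    by (simp add: det_mult[of _ k])
  moreover have "det (lead k L) = 1"
    using det_lower_prod[of "lead k L" k] Lup Ld k by (simp add: lead_def)
  moreover have "det (lead k (minv U)) = (\<Prod>i<k. minv U $$ (i, i))"
    using det_upper_prod[of "lead k (minv U)" k] VU k by (simp add: lead_def)
  ultimately show "det (lead k M) = (\<Prod>i<k. minv U $$ (i, i))" by simp
qed

lemma Bpoly_entry:
  assumes L: "L \<in> carrier_mat N N" and r: "r < N" and j: "j < q" and jN: "j < N"
  shows "Bpoly q N L 0 $$ (r, j) = L $$ (r, j)"
proof -
  have "Bpoly q N L 0 $$ (r, j) = (\<Sum>t<N. L $$ (r, t) * Xmat q N 0 $$ (t, j))"
    using L r j by (simp add: Bpoly_def Xmat_def scalar_prod_def lessThan_atLeast0)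
  also have "\<dots> = (\<Sum>t<N. if t = j then L $$ (r, t) else 0)"
  proof (rule sum.cong)
    fix t assume t: "t \<in> {..<N}"
    show "L $$ (r, t) * Xmat q N 0 $$ (t, j) = (if t = j then L $$ (r, t) else 0)"
    proof (cases "t < q")
      case True thus ?thesis using t j by (auto simp: Xmat_def)
    next
      case False
      hence "t div q \<noteq> 0" using j by (simp add: div_greater_zero_iff)
      thus ?thesis using t j False by (auto simp: Xmat_def)
    qed
  qed simp
  also have "\<dots> = L $$ (r, j)" using jN by simp
  finally show ?thesis .
qed

lemma tauB_formula:
  assumes gb: "gauss_borel N M0 L U" and b: "1 \<le> b" "b \<le> q" and nb: "n + b \<le> N"
  shows "det (lead n M0) * tauB q N L b n = (-1) ^ (n * b) * det (mat n n (\<lambda>(i, j). M0 $$ (i + b, j)))"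
proof -
  note F = GB_facts[OF gb]
  define s where "s = n + b"
  define K where "K = lead s L"
  define Z where "Z = mat s s (\<lambda>(r, c). if c < n then M0 $$ (r, c) else if r = c - n then 1 else (0::real))"
  define G where "G = K * Z"
  have Kc: "K \<in> carrier_mat s s" and Zc: "Z \<in> carrier_mat s s" unfolding K_def Z_def by auto
  have Gc: "G \<in> carrier_mat (n + b) (n + b)" unfolding G_def s_def[symmetric] using Kc Zc by auto
  have detZ: "det Z = (-1) ^ (n * b) * det (mat n n (\<lambda>(i, j). M0 $$ (i + b, j)))"
    unfolding Z_def s_def using det_unitcols[of n b "\<lambda>r c. M0 $$ (r, c)"] by simp
  have detK: "det K = 1"
    using det_lower_prod[of K s] F(13,14) nb unfolding K_def s_def by (simp add: lead_def)
  have Gent: "G $$ (r, c) = (\<Sum>t<s. L $$ (r, t) * Z $$ (t, c))" if "r < s" "c < s" for r c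
    using that Kc Zc unfolding G_def K_def by (simp add: lead_def scalar_prod_def lessThan_atLeast0)
  have G1: "G $$ (r, c) = minv U $$ (r, c)" if r: "r < s" and c: "c < n" for r c
  proof -
    have "G $$ (r, c) = (\<Sum>t<s. L $$ (r, t) * M0 $$ (t, c))"
      using Gent[of r c] r c unfolding s_def Z_def by simp
    also have "\<dots> = (\<Sum>t<N. L $$ (r, t) * M0 $$ (t, c))"
      by (rule sum.mono_neutral_left) (use r nb F(13) in \<open>auto simp: s_def\<close>)
    also have "\<dots> = (L * M0) $$ (r, c)"
      using F(1,2) r c nb by (simp add: s_def scalar_prod_def lessThan_atLeast0)
    finally show ?thesis using F(4) by simp
  qed
  have G2: "G $$ (r, c) = L $$ (r, c - n)" if r: "r < s" and c: "c < s" "n \<le> c" for r c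
  proof -
    have "G $$ (r, c) = (\<Sum>t<s. L $$ (r, t) * (if t = c - n then 1 else 0))"
      using Gent[of r c] r c unfolding Z_def by simp
    also have "\<dots> = (\<Sum>t<s. if t = c - n then L $$ (r, t) else 0)"
      by (rule sum.cong) auto
    also have "\<dots> = L $$ (r, c - n)" using c by (simp add: s_def)
    finally show ?thesis .
  qed
  have "det G = det (mat n n (\<lambda>(r, c). G $$ (r, c))) * det (mat b b (\<lambda>(r, c). G $$ (r + n, c + n)))"
  proof (rule det_block_upper[OF Gc])
    fix r c assume "n \<le> r" "r < n + b" "c < n"
    thus "G $$ (r, c) = 0" using G1[of r c] F(8)[of r c] nb by (simp add: s_def)
  qed
  also have "mat n n (\<lambda>(r, c). G $$ (r, c)) = lead n (minv U)"
    unfolding lead_def by (rule eq_matI) (auto simp: G1 s_def)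
  also have "det (lead n (minv U)) = (\<Prod>i<n. minv U $$ (i, i))"
    using det_upper_prod[of "lead n (minv U)" n] F(8) nb by (simp add: lead_def)
  also have "\<dots> = det (lead n M0)" using F(15)[of n] nb by simp
  also have "mat b b (\<lambda>(r, c). G $$ (r + n, c + n)) = mat b b (\<lambda>(i, j). Bpoly q N L 0 $$ (n + i, j))"
    by (rule eq_matI) (use b nb F(2) in \<open>auto simp: G2 s_def Bpoly_entry add.commute\<close>)
  also have "det \<dots> = tauB q N L b n" using b unfolding tauB_def by simp
  finally have "det G = det (lead n M0) * tauB q N L b n" .
  moreover have "det G = det K * det Z" unfolding G_def by (rule det_mult[OF Kc Zc])
  ultimately show ?thesis using detK detZ by simp
qed

lemma det_unitrows:
  fixes f :: "nat \<Rightarrow> nat \<Rightarrow> real"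
  shows "det (mat (n + b) (n + b) (\<lambda>(r, c). if r < n then f r c else if c = r - n then 1 else 0))
         = (-1) ^ (n * b) * det (mat n n (\<lambda>(r, c). f r (c + b)))"
proof -
  have "mat (n + b) (n + b) (\<lambda>(r, c). if r < n then f r c else if c = r - n then 1 else 0)
      = transpose_mat (mat (n + b) (n + b) (\<lambda>(r, c). if c < n then f c r else if r = c - n then 1 else 0))"
    by (rule eq_matI) auto
  hence "det (mat (n + b) (n + b) (\<lambda>(r, c). if r < n then f r c else if c = r - n then 1 else 0))
      = det (mat (n + b) (n + b) (\<lambda>(r, c). if c < n then f c r else if r = c - n then 1 else 0))"
    by (simp add: det_transpose[OF mat_carrier])
  also have "\<dots> = (-1) ^ (n * b) * det (mat n n (\<lambda>(r, c). f c (r + b)))"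
    using det_unitcols[of n b "\<lambda>r c. f c r"] by simp
  also have "mat n n (\<lambda>(r, c). f c (r + b)) = transpose_mat (mat n n (\<lambda>(r, c). f r (c + b)))"
    by (rule eq_matI) auto
  finally show ?thesis by (simp add: det_transpose[OF mat_carrier])
qed

lemma det_block_lower:
  fixes G :: "real mat"
  assumes G: "G \<in> carrier_mat (n + b) (n + b)"
    and z: "\<And>r c. r < n \<Longrightarrow> n \<le> c \<Longrightarrow> c < n + b \<Longrightarrow> G $$ (r, c) = 0"
  shows "det G = det (mat n n (\<lambda>(r, c). G $$ (r, c))) * det (mat b b (\<lambda>(r, c). G $$ (r + n, c + n)))"
proof -
  have "G = four_block_mat (mat n n (\<lambda>(r, c). G $$ (r, c))) (0\<^sub>m n b)
            (mat b n (\<lambda>(r, c). G $$ (r + n, c))) (mat b b (\<lambda>(r, c). G $$ (r + n, c + n)))"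
    by (rule eq_matI) (use G z in auto)
  also have "det \<dots> = det (mat n n (\<lambda>(r, c). G $$ (r, c))) * det (mat b b (\<lambda>(r, c). G $$ (r + n, c + n)))"
    by (rule det_four_block_mat_upper_right_zero) auto
  finally show ?thesis .
qed

definition rho :: "nat \<Rightarrow> real" where
  "rho a = det (mat a a (\<lambda>(j, k). if j + k + 1 = a then 1 else 0))"

lemma rho_nz: "rho a \<noteq> 0"
proof -
  define R where "R = mat a a (\<lambda>(j, k). if j + k + 1 = a then 1 else (0::real))"
  have Rc: "R \<in> carrier_mat a a" unfolding R_def by simp
  have "R * R = 1\<^sub>m a"
  proof (rule eq_matI)
    fix i k assume "i < dim_row (1\<^sub>m a)" "k < dim_col (1\<^sub>m a)"
    hence i: "i < a" and k: "k < a" by auto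
    have "(R * R) $$ (i, k) = (\<Sum>j<a. (if i + j + 1 = a then 1 else 0) * (if j + k + 1 = a then 1 else (0::real)))"
      using i k by (simp add: R_def scalar_prod_def lessThan_atLeast0)
    also have "\<dots> = (\<Sum>j<a. if j = a - (i + 1) then (if j + k + 1 = a then 1 else 0) else 0)"
      by (rule sum.cong) (use i in auto)
    also have "\<dots> = (if i = k then 1 else 0)" using i k by auto
    finally show "(R * R) $$ (i, k) = 1\<^sub>m a $$ (i, k)" using i k by simp
  qed (auto simp: R_def)
  hence "det R * det R = 1" using det_mult[OF Rc Rc] by simp
  thus ?thesis unfolding rho_def R_def[symmetric] by auto
qed

lemma Apoly_entry:
  assumes U: "U \<in> carrier_mat N N" and i: "i < p" and iN: "i < N" and c: "c < N"
  shows "Apoly p N U 0 $$ (i, c) = U $$ (i, c)"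
proof -
  have "Apoly p N U 0 $$ (i, c) = (\<Sum>t<N. Xmat p N 0 $$ (t, i) * U $$ (t, c))"
    using U i c by (simp add: Apoly_def Xmat_def scalar_prod_def lessThan_atLeast0)
  also have "\<dots> = (\<Sum>t<N. if t = i then U $$ (t, c) else 0)"
  proof (rule sum.cong)
    fix t assume t: "t \<in> {..<N}"
    show "Xmat p N 0 $$ (t, i) * U $$ (t, c) = (if t = i then U $$ (t, c) else 0)"
    proof (cases "t < p")
      case True thus ?thesis using t i by (auto simp: Xmat_def)
    next
      case False
      hence "t div p \<noteq> 0" using i by (simp add: div_greater_zero_iff)
      thus ?thesis using t i False by (auto simp: Xmat_def)
    qed
  qed simp
  also have "\<dots> = U $$ (i, c)" using iN by simp
  finally show ?thesis .
qed

lemma tauA_formula: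
  assumes gb: "gauss_borel N M0 L U" and a: "1 \<le> a" "a \<le> p" and na: "n + a \<le> N"
  shows "det (lead (n + a) M0) * tauA p N U a n = rho a * (-1) ^ (n * a) * det (mat n n (\<lambda>(i, j). M0 $$ (i, j + a)))"
proof -
  note F = GB_facts[OF gb]
  define s where "s = n + a"
  define K where "K = lead s U"
  define Z where "Z = mat s s (\<lambda>(r, c). if r < n then M0 $$ (r, c) else if c = r - n then 1 else (0::real))"
  define G where "G = Z * K"
  define Q where "Q = mat a a (\<lambda>(i, j). U $$ (i, n + j))"
  define R where "R = mat a a (\<lambda>(j, k). if j + k + 1 = a then 1 else (0::real))"
  have Kc: "K \<in> carrier_mat s s" and Zc: "Z \<in> carrier_mat s s" unfolding K_def Z_def by auto
  have Qc: "Q \<in> carrier_mat a a" and Rc: "R \<in> carrier_mat a a" unfolding Q_def R_def by auto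
  have Gc: "G \<in> carrier_mat (n + a) (n + a)" unfolding G_def s_def[symmetric] using Kc Zc by auto
  have detZ: "det Z = (-1) ^ (n * a) * det (mat n n (\<lambda>(i, j). M0 $$ (i, j + a)))"
    unfolding Z_def s_def using det_unitrows[of n a "\<lambda>r c. M0 $$ (r, c)"] by simp
  have detK: "det K = (\<Prod>i<s. U $$ (i, i))"
    using det_upper_prod[of K s] F(12) na unfolding K_def s_def by (simp add: lead_def)
  have Gent: "G $$ (r, c) = (\<Sum>t<s. Z $$ (r, t) * U $$ (t, c))" if "r < s" "c < s" for r c
    using that Kc Zc unfolding G_def K_def by (simp add: lead_def scalar_prod_def lessThan_atLeast0)
  have G1: "G $$ (r, c) = minv L $$ (r, c)" if r: "r < n" and c: "c < s" for r c
  proof -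
    have "G $$ (r, c) = (\<Sum>t<s. M0 $$ (r, t) * U $$ (t, c))"
      using Gent[of r c] r c unfolding s_def Z_def by simp
    also have "\<dots> = (\<Sum>t<N. M0 $$ (r, t) * U $$ (t, c))"
      by (rule sum.mono_neutral_left) (use c na F(12) in \<open>auto simp: s_def\<close>)
    also have "\<dots> = (M0 * U) $$ (r, c)"
      using F(1,3) r c na by (simp add: s_def scalar_prod_def lessThan_atLeast0)
    finally show ?thesis using F(5) by simp
  qed
  have G2: "G $$ (r, c) = U $$ (r - n, c)" if r: "r < s" "n \<le> r" and c: "c < s" for r c
  proof -
    have "G $$ (r, c) = (\<Sum>t<s. (if t = r - n then 1 else 0) * U $$ (t, c))"
      using Gent[of r c] r c unfolding Z_def by simp
    also have "\<dots> = (\<Sum>t<s. if t = r - n then U $$ (t, c) else 0)"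
      by (rule sum.cong) auto
    also have "\<dots> = U $$ (r - n, c)" using r by (simp add: s_def)
    finally show ?thesis .
  qed
  have "det G = det (mat n n (\<lambda>(r, c). G $$ (r, c))) * det (mat a a (\<lambda>(r, c). G $$ (r + n, c + n)))"
  proof (rule det_block_lower[OF Gc])
    fix r c assume "r < n" "n \<le> c" "c < n + a"
    thus "G $$ (r, c) = 0" using G1[of r c] F(10)[of r c] na by (simp add: s_def)
  qed
  also have "mat n n (\<lambda>(r, c). G $$ (r, c)) = lead n (minv L)"
    unfolding lead_def by (rule eq_matI) (auto simp: G1 s_def)
  also have "det (lead n (minv L)) = 1"
    using det_lower_prod[of "lead n (minv L)" n] F(10,11) na by (simp add: lead_def)
  also have "mat a a (\<lambda>(r, c). G $$ (r + n, c + n)) = Q"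
    unfolding Q_def by (rule eq_matI) (auto simp: G2 s_def add.commute)
  finally have dG: "det G = det Q" by simp
  have "det G = det Z * det K" unfolding G_def by (rule det_mult[OF Zc Kc])
  hence "det (lead s M0) * det Q = det (lead s M0) * det K * det Z" using dG by simp
  also have "det (lead s M0) * det K = (\<Prod>i<s. minv U $$ (i, i) * U $$ (i, i))"
    using F(15)[of s] na detK by (simp add: s_def prod.distrib)
  also have "\<dots> = 1" using F(9) na by (simp add: s_def)
  finally have dQ: "det (lead s M0) * det Q = det Z" by simp
  have "mat a a (\<lambda>(i, k). Apoly p N U 0 $$ (i, n + a - (k + 1))) = Q * R"
  proof (rule eq_matI)
    fix i k assume "i < dim_row (Q * R)" "k < dim_col (Q * R)"
    hence i: "i < a" and k: "k < a" using Qc Rc by auto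
    have "(Q * R) $$ (i, k) = (\<Sum>j<a. U $$ (i, n + j) * (if j + k + 1 = a then 1 else 0))"
      using i k by (simp add: Q_def R_def scalar_prod_def lessThan_atLeast0)
    also have "\<dots> = (\<Sum>j<a. if j = a - (k + 1) then U $$ (i, n + j) else 0)"
      by (rule sum.cong) (use k in auto)
    also have "\<dots> = U $$ (i, n + a - (k + 1))" using k by (simp add: add_diff_assoc)
    also have "\<dots> = Apoly p N U 0 $$ (i, n + a - (k + 1))"
      using Apoly_entry[OF F(3), where i=i and p=p and c="n + a - (k + 1)"] i k a na by simp
    finally show "mat a a (\<lambda>(i, k). Apoly p N U 0 $$ (i, n + a - (k + 1))) $$ (i, k) = (Q * R) $$ (i, k)"
      using i k by simp
  qed (use Qc Rc in auto)
  hence "tauA p N U a n = det Q * rho a"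
    using a det_mult[OF Qc Rc] unfolding tauA_def rho_def R_def by simp
  thus ?thesis using dQ detZ by (simp add: s_def)
qed

lemma rho0: "rho 0 = 1"
  unfolding rho_def using det_upper_prod[of "mat 0 0 (\<lambda>(j, k). if j + k + 1 = 0 then 1 else 0)" 0] by simp

lemma tri_prod_diag:
  fixes A B :: "real mat"
  assumes A: "A \<in> carrier_mat N N" and B: "B \<in> carrier_mat N N" and n: "n < N"
    and uA: "\<And>i j. i < N \<Longrightarrow> j < N \<Longrightarrow> j < i \<Longrightarrow> A $$ (i, j) = 0"
    and uB: "\<And>i j. i < N \<Longrightarrow> j < N \<Longrightarrow> j < i \<Longrightarrow> B $$ (i, j) = 0"
  shows "(A * B) $$ (n, n) = A $$ (n, n) * B $$ (n, n)"
proof -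
  have "(A * B) $$ (n, n) = (\<Sum>t<N. A $$ (n, t) * B $$ (t, n))"
    using A B n by (simp add: scalar_prod_def lessThan_atLeast0)
  also have "\<dots> = (\<Sum>t\<in>{n}. A $$ (n, t) * B $$ (t, n))"
  proof (rule sum.mono_neutral_right)
    show "\<forall>i\<in>{..<N} - {n}. A $$ (n, i) * B $$ (i, n) = 0"
    proof
      fix i assume "i \<in> {..<N} - {n}"
      hence "i < n \<or> n < i" "i < N" by auto
      thus "A $$ (n, i) * B $$ (i, n) = 0" using uA[of n i] uB[of i n] n by auto
    qed
  qed (use n in auto)
  finally show ?thesis by simp
qed

lemma lead_prod:
  assumes gb: "gauss_borel N M L U" and k: "k \<le> N"
  shows "det (lead k M) = (\<Prod>i<k. minv U $$ (i, i))"
    and "\<And>i. i < N \<Longrightarrow> minv U $$ (i, i) \<noteq> 0"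
  using GB_facts(15)[OF gb k] apply simp
  using GB_facts(9)[OF gb] by (metis mult_zero_left zero_neq_one)

theorem mainTheorem2:
  fixes p q N :: nat
    and \<mu> :: "nat \<Rightarrow> nat \<Rightarrow> smeasure"
    and LF UF :: "nat \<times> nat \<Rightarrow> real mat"
  assumes "p \<ge> 1" and "q \<ge> 1" and "N \<ge> 1"
    and meas: "\<forall>i<q. \<forall>j<p. real_measure_fm (\<mu> i j)"
    and GB: "\<forall>nm \<in> {(0, 0)} \<union> {(b, 0) | b. 1 \<le> b \<and> b \<le> q} \<union> {(0, a) | a. 1 \<le> a \<and> a \<le> p}.
               gauss_borel N (moment_mat q p \<mu> (fst nm) (snd nm) N N) (LF nm) (UF nm)"
  shows "(\<forall>b n. 1 \<le> b \<and> b \<le> q \<and> n + b + 1 \<le> N \<longrightarrow>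
            (minv (UF (b, 0)) * UF (b - 1, 0)) $$ (n, n) =
              - (tauB q N (LF (0, 0)) (b - 1) n * tauB q N (LF (0, 0)) b (n + 1)) /
                (tauB q N (LF (0, 0)) (b - 1) (n + 1) * tauB q N (LF (0, 0)) b n))
       \<and> (\<forall>a n. 1 \<le> a \<and> a \<le> p \<and> n + a + 1 \<le> N \<longrightarrow>
            (LF (0, a - 1) * minv (LF (0, a))) $$ (n + 1, n) =
              - (tauA p N (UF (0, 0)) (a - 1) (n + 2) * tauA p N (UF (0, 0)) a n) /
                (tauA p N (UF (0, 0)) (a - 1) (n + 1) * tauA p N (UF (0, 0)) a (n + 1)))"
proof -
  define M where "M = (\<lambda>x y. moment_mat q p \<mu> x y N N)"
  have q1: "q \<ge> 1" and p1: "p \<ge> 1" using assms by auto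
  have ent: "M x y $$ (i, j) = gm q p \<mu> (i + x) (j + y)" if "i < N" "j < N" for x y i j
    unfolding M_def by (rule moment_entry) (use that q1 p1 in auto)
  have gbB: "gauss_borel N (M b 0) (LF (b, 0)) (UF (b, 0))" if "b \<le> q" for b
  proof -
    have "(b, 0) \<in> {(0, 0)} \<union> {(b, 0) | b. 1 \<le> b \<and> b \<le> q} \<union> {(0, a) | a. 1 \<le> a \<and> a \<le> p}"
      using that by (cases "b = 0") auto
    from bspec[OF GB this] show ?thesis unfolding M_def by simp
  qed
  have gbA: "gauss_borel N (M 0 a) (LF (0, a)) (UF (0, a))" if "a \<le> p" for a
  proof -
    have "(0, a) \<in> {(0, 0)} \<union> {(b, 0) | b. 1 \<le> b \<and> b \<le> q} \<union> {(0, a) | a. 1 \<le> a \<and> a \<le> p}"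
      using that by (cases "a = 0") auto
    from bspec[OF GB this] show ?thesis unfolding M_def by simp
  qed
  have gb0: "gauss_borel N (M 0 0) (LF (0, 0)) (UF (0, 0))" using gbB by simp
  define D where "D k = det (lead k (M 0 0))" for k
  define DB where "DB b k = det (mat k k (\<lambda>(i, j). M 0 0 $$ (i + b, j)))" for b k
  define DA where "DA a k = det (mat k k (\<lambda>(i, j). M 0 0 $$ (i, j + a)))" for a k
  have leadB: "lead k (M b 0) = mat k k (\<lambda>(i, j). M 0 0 $$ (i + b, j))" if "k + b \<le> N" for b k
    unfolding lead_def by (rule eq_matI) (use that in \<open>auto simp: ent\<close>)
  have leadA: "lead k (M 0 a) = mat k k (\<lambda>(i, j). M 0 0 $$ (i, j + a))" if "k + a \<le> N" for a k
    unfolding lead_def by (rule eq_matI) (use that in \<open>auto simp: ent add.assoc\<close>)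
  have DBprod: "DB b k = (\<Prod>i<k. minv (UF (b, 0)) $$ (i, i))" if "b \<le> q" "k + b \<le> N" for b k
    using lead_prod(1)[OF gbB[OF that(1)], of k] leadB[OF that(2)] that unfolding DB_def by simp
  have DAprod: "DA a k = (\<Prod>i<k. minv (UF (0, a)) $$ (i, i))" if "a \<le> p" "k + a \<le> N" for a k
    using lead_prod(1)[OF gbA[OF that(1)], of k] leadA[OF that(2)] that unfolding DA_def by simp
  have VBnz: "minv (UF (b, 0)) $$ (i, i) \<noteq> 0" if "b \<le> q" "i < N" for b i
    using lead_prod(2)[OF gbB[OF that(1)] le_refl] that by simp
  have VAnz: "minv (UF (0, a)) $$ (i, i) \<noteq> 0" if "a \<le> p" "i < N" for a i
    using lead_prod(2)[OF gbA[OF that(1)] le_refl] that by simp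
  have DBnz: "DB b k \<noteq> 0" if "b \<le> q" "k + b \<le> N" for b k
    using DBprod[OF that] VBnz[OF that(1)] that by (simp add: prod_zero_iff)
  have DAnz: "DA a k \<noteq> 0" if "a \<le> p" "k + a \<le> N" for a k
    using DAprod[OF that] VAnz[OF that(1)] that by (simp add: prod_zero_iff)
  have D_DB: "D k = DB 0 k" for k unfolding D_def DB_def lead_def by simp
  have D_DA: "D k = DA 0 k" for k unfolding D_def DA_def lead_def by simp
  have Dnz: "D k \<noteq> 0" if "k \<le> N" for k using DBnz[of 0 k] that D_DB by simp
  have tB: "D k * tauB q N (LF (0, 0)) b k = (-1) ^ (k * b) * DB b k" if "b \<le> q" "k + b \<le> N" for b k
  proof (cases "b = 0")
    case True thus ?thesis using D_DB unfolding tauB_def by simp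
  next
    case False
    thus ?thesis using tauB_formula[OF gb0, where b=b and q=q and n=k] that unfolding D_def DB_def by simp
  qed
  have tA: "D (k + a) * tauA p N (UF (0, 0)) a k = rho a * (-1) ^ (k * a) * DA a k"
    if "a \<le> p" "k + a \<le> N" for a k
  proof (cases "a = 0")
    case True thus ?thesis using D_DA rho0 unfolding tauA_def by simp
  next
    case False
    thus ?thesis using tauA_formula[OF gb0, where a=a and p=p and n=k] that unfolding D_def DA_def by simp
  qed
  show ?thesis
  proof (intro conjI allI impI)
    fix b n assume H: "1 \<le> b \<and> b \<le> q \<and> n + b + 1 \<le> N"
    then obtain c where bc: "b = Suc c" by (cases b) auto
    have cq: "c \<le> q" and bq: "b \<le> q" using H bc by auto
    note Fb = GB_facts[OF gbB[OF bq]] and Fc = GB_facts[OF gbB[OF cq]]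
    have nN: "n < N" using H by auto
    have LHS: "(minv (UF (b, 0)) * UF (c, 0)) $$ (n, n) = minv (UF (b, 0)) $$ (n, n) * UF (c, 0) $$ (n, n)"
      by (rule tri_prod_diag[OF Fb(6) Fc(3) nN Fb(8) Fc(12)])
    have Uc: "UF (c, 0) $$ (n, n) = 1 / minv (UF (c, 0)) $$ (n, n)"
    proof -
      have "minv (UF (c, 0)) $$ (n, n) \<noteq> 0" using VBnz[OF cq nN] .
      thus ?thesis using Fc(9)[OF nN] by (simp add: field_simps mult.commute)
    qed
    have pb: "DB b (Suc n) = DB b n * minv (UF (b, 0)) $$ (n, n)"
      using DBprod[OF bq, of "Suc n"] DBprod[OF bq, of n] H by simp
    have pc: "DB c (Suc n) = DB c n * minv (UF (c, 0)) $$ (n, n)"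
      using DBprod[OF cq, of "Suc n"] DBprod[OF cq, of n] H bc by simp
    have nz: "DB b n \<noteq> 0" "DB c n \<noteq> 0" "DB c (Suc n) \<noteq> 0" "DB b (Suc n) \<noteq> 0" "D n \<noteq> 0" "D (Suc n) \<noteq> 0"
      using DBnz[OF bq, of n] DBnz[OF cq, of n] DBnz[OF cq, of "Suc n"] DBnz[OF bq, of "Suc n"]
        Dnz[of n] Dnz[of "Suc n"] H bc by auto
    have t1: "D n * tauB q N (LF (0, 0)) c n = (-1) ^ (n * c) * DB c n" using tB[OF cq, of n] H bc by simp
    have t2: "D (Suc n) * tauB q N (LF (0, 0)) b (Suc n) = - ((-1) ^ (Suc n * c) * (-1) ^ n * DB b (Suc n))"
      using tB[OF bq, of "Suc n"] H bc by (simp add: power_add)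
    have t3: "D (Suc n) * tauB q N (LF (0, 0)) c (Suc n) = (-1) ^ (Suc n * c) * DB c (Suc n)"
      using tB[OF cq, of "Suc n"] H bc by simp
    have t4: "D n * tauB q N (LF (0, 0)) b n = (-1) ^ (n * c) * (-1) ^ n * DB b n"
      using tB[OF bq, of n] H bc by (simp add: power_add)
    define E1 where "E1 = (-1::real) ^ (n * c)"
    define E2 where "E2 = (-1::real) ^ (Suc n * c)"
    define E3 where "E3 = (-1::real) ^ n"
    have Enz: "E1 \<noteq> 0" "E2 \<noteq> 0" "E3 \<noteq> 0" unfolding E1_def E2_def E3_def by auto
    have V1: "minv (UF (b, 0)) $$ (n, n) = DB b (Suc n) / DB b n" using pb nz by (simp add: field_simps)
    have V2: "minv (UF (c, 0)) $$ (n, n) = DB c (Suc n) / DB c n" using pc nz by (simp add: field_simps)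
    have T1: "tauB q N (LF (0, 0)) c n = E1 * DB c n / D n" using t1 nz unfolding E1_def by (simp add: field_simps)
    have T2: "tauB q N (LF (0, 0)) b (Suc n) = - (E2 * E3 * DB b (Suc n)) / D (Suc n)"
      using t2 nz unfolding E2_def E3_def by (simp add: field_simps)
    have T3: "tauB q N (LF (0, 0)) c (Suc n) = E2 * DB c (Suc n) / D (Suc n)"
      using t3 nz unfolding E2_def by (simp add: field_simps)
    have T4: "tauB q N (LF (0, 0)) b n = E1 * E3 * DB b n / D n"
      using t4 nz unfolding E1_def E3_def by (simp add: field_simps)
    show "(minv (UF (b, 0)) * UF (b - 1, 0)) $$ (n, n) =
              - (tauB q N (LF (0, 0)) (b - 1) n * tauB q N (LF (0, 0)) b (n + 1)) /
                (tauB q N (LF (0, 0)) (b - 1) (n + 1) * tauB q N (LF (0, 0)) b n)"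
    proof -
      have e: "- (tauB q N (LF (0, 0)) c n * tauB q N (LF (0, 0)) b (Suc n)) /
                (tauB q N (LF (0, 0)) c (Suc n) * tauB q N (LF (0, 0)) b n)
             = DB c n * DB b (Suc n) / (DB c (Suc n) * DB b n)"
        unfolding T1 T2 T3 T4 using nz Enz by (simp add: field_simps)
      have l: "(minv (UF (b, 0)) * UF (c, 0)) $$ (n, n) = DB c n * DB b (Suc n) / (DB c (Suc n) * DB b n)"
        unfolding LHS Uc V1 V2 using nz by (simp add: field_simps)
      have bc1: "b - 1 = c" using bc by simp
      show ?thesis unfolding bc1 Suc_eq_plus1[symmetric] using e l by simp
    qed
  next
    fix a n assume H: "1 \<le> a \<and> a \<le> p \<and> n + a + 1 \<le> N"
    then obtain c where ac: "a = Suc c" by (cases a) auto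
    have cp: "c \<le> p" and ap: "a \<le> p" using H ac by auto
    note Fa = GB_facts[OF gbA[OF ap]] and Fc = GB_facts[OF gbA[OF cp]]
    define P where "P = LF (0, c) * minv (LF (0, a))"
    have Pc: "P \<in> carrier_mat N N" unfolding P_def using Fa(7) Fc(2) by simp
    have n1N: "Suc n < N" using H by auto
    have Ma: "M 0 a = minv (LF (0, a)) * minv (UF (0, a))"
      using gbA[OF ap] unfolding gauss_borel_def by simp
    have PV: "P * minv (UF (0, a)) = LF (0, c) * M 0 a"
      unfolding P_def Ma by (rule assoc_mult_mat) (use Fa Fc in auto)
    have key: "(\<forall>t<n. P $$ (Suc n, t) = 0) \<and> P $$ (Suc n, n) * minv (UF (0, a)) $$ (n, n) = minv (UF (0, c)) $$ (Suc n, Suc n)"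
    proof (rule tri_solve[where N=N])
      show "\<And>i j. i < N \<Longrightarrow> j < N \<Longrightarrow> j < i \<Longrightarrow> minv (UF (0, a)) $$ (i, j) = 0" by (fact Fa(8))
      show "\<And>i. i < N \<Longrightarrow> minv (UF (0, a)) $$ (i, i) \<noteq> 0" using VAnz[OF ap] by simp
      show "n < N" using H by simp
      fix c' assume c': "c' \<le> n"
      have "(\<Sum>t<N. P $$ (Suc n, t) * minv (UF (0, a)) $$ (t, c')) = (P * minv (UF (0, a))) $$ (Suc n, c')"
        using Pc Fa(6) n1N c' by (simp add: scalar_prod_def lessThan_atLeast0)
      also have "\<dots> = (\<Sum>t<N. LF (0, c) $$ (Suc n, t) * M 0 a $$ (t, c'))"
        unfolding PV using Fa(1) Fc(2) n1N c' by (simp add: scalar_prod_def lessThan_atLeast0)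
      also have "\<dots> = (\<Sum>t<N. LF (0, c) $$ (Suc n, t) * M 0 c $$ (t, Suc c'))"
        by (rule sum.cong) (use n1N c' ac in \<open>auto simp: ent\<close>)
      also have "\<dots> = (LF (0, c) * M 0 c) $$ (Suc n, Suc c')"
        using Fc(1) Fc(2) n1N c' by (simp add: scalar_prod_def lessThan_atLeast0)
      also have "\<dots> = minv (UF (0, c)) $$ (Suc n, Suc c')" using Fc(4) by simp
      also have "\<dots> = (if c' = n then minv (UF (0, c)) $$ (Suc n, Suc n) else 0)"
        using Fc(8)[of "Suc n" "Suc c'"] n1N c' by auto
      finally show "(\<Sum>t<N. P $$ (Suc n, t) * minv (UF (0, a)) $$ (t, c')) =
          (if c' = n then minv (UF (0, c)) $$ (Suc n, Suc n) else 0)" .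
    qed
    have pa: "DA a (Suc n) = DA a n * minv (UF (0, a)) $$ (n, n)"
      using DAprod[OF ap, of "Suc n"] DAprod[OF ap, of n] H by simp
    have pc: "DA c (Suc (Suc n)) = DA c (Suc n) * minv (UF (0, c)) $$ (Suc n, Suc n)"
      using DAprod[OF cp, of "Suc (Suc n)"] DAprod[OF cp, of "Suc n"] H ac by simp
    have nz: "DA a n \<noteq> 0" "DA a (Suc n) \<noteq> 0" "DA c (Suc n) \<noteq> 0" "DA c (Suc (Suc n)) \<noteq> 0"
      "D (n + a) \<noteq> 0" "D (Suc (n + a)) \<noteq> 0" "rho a \<noteq> 0" "rho c \<noteq> 0"
      using DAnz[OF ap, of n] DAnz[OF ap, of "Suc n"] DAnz[OF cp, of "Suc n"] DAnz[OF cp, of "Suc (Suc n)"]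
        Dnz[of "n + a"] Dnz[of "Suc (n + a)"] rho_nz H ac by auto
    have t1: "D (Suc (n + a)) * tauA p N (UF (0, 0)) c (Suc (Suc n)) = rho c * (-1) ^ (n * c) * (-1) ^ c * (-1) ^ c * DA c (Suc (Suc n))"
      using tA[OF cp, of "Suc (Suc n)"] H ac by (simp add: power_add algebra_simps)
    have t2: "D (n + a) * tauA p N (UF (0, 0)) a n = rho a * (-1) ^ (n * c) * (-1) ^ n * DA a n"
      using tA[OF ap, of n] H ac by (simp add: power_add algebra_simps)
    have t3: "D (n + a) * tauA p N (UF (0, 0)) c (Suc n) = rho c * (-1) ^ (n * c) * (-1) ^ c * DA c (Suc n)"
      using tA[OF cp, of "Suc n"] H ac by (simp add: power_add algebra_simps)
    have t4: "D (Suc (n + a)) * tauA p N (UF (0, 0)) a (Suc n) = - (rho a * (-1) ^ (n * c) * (-1) ^ c * (-1) ^ n * DA a (Suc n))"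
      using tA[OF ap, of "Suc n"] H ac by (simp add: power_add algebra_simps)
    define E1 where "E1 = (-1::real) ^ (n * c)"
    define E2 where "E2 = (-1::real) ^ c"
    define E3 where "E3 = (-1::real) ^ n"
    have Enz: "E1 \<noteq> 0" "E2 \<noteq> 0" "E3 \<noteq> 0" unfolding E1_def E2_def E3_def by auto
    have T1: "tauA p N (UF (0, 0)) c (Suc (Suc n)) = rho c * E1 * E2 * E2 * DA c (Suc (Suc n)) / D (Suc (n + a))"
      using t1 nz unfolding E1_def E2_def by (simp add: field_simps)
    have T2: "tauA p N (UF (0, 0)) a n = rho a * E1 * E3 * DA a n / D (n + a)"
      using t2 nz unfolding E1_def E3_def by (simp add: field_simps)
    have T3: "tauA p N (UF (0, 0)) c (Suc n) = rho c * E1 * E2 * DA c (Suc n) / D (n + a)"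
      using t3 nz unfolding E1_def E2_def by (simp add: field_simps)
    have T4: "tauA p N (UF (0, 0)) a (Suc n) = - (rho a * E1 * E2 * E3 * DA a (Suc n)) / D (Suc (n + a))"
      using t4 nz unfolding E1_def E2_def E3_def by (simp add: field_simps)
    have Vnz: "minv (UF (0, a)) $$ (n, n) \<noteq> 0" using VAnz[OF ap] H by simp
    have Pv: "P $$ (Suc n, n) = DA c (Suc (Suc n)) * DA a n / (DA c (Suc n) * DA a (Suc n))"
      using key pa pc nz Vnz by (simp add: field_simps)
    show "(LF (0, a - 1) * minv (LF (0, a))) $$ (n + 1, n) =
              - (tauA p N (UF (0, 0)) (a - 1) (n + 2) * tauA p N (UF (0, 0)) a n) /
                (tauA p N (UF (0, 0)) (a - 1) (n + 1) * tauA p N (UF (0, 0)) a (n + 1))"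
    proof -
      have e: "- (tauA p N (UF (0, 0)) c (Suc (Suc n)) * tauA p N (UF (0, 0)) a n) /
                (tauA p N (UF (0, 0)) c (Suc n) * tauA p N (UF (0, 0)) a (Suc n))
             = DA c (Suc (Suc n)) * DA a n / (DA c (Suc n) * DA a (Suc n))"
        unfolding T1 T2 T3 T4 using nz Enz by (simp add: field_simps)
      have ac1: "a - 1 = c" and n2: "n + 2 = Suc (Suc n)" using ac by simp_all
      show ?thesis unfolding ac1 n2 Suc_eq_plus1[symmetric] using e Pv unfolding P_def by simp
    qed
  qed
qed

end
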